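(* Let $S=(s_{ij})$ be an irreducible $k\times k$ matrix with nonnegative integer entries. If the system of equations $n_is_{ij}=n_js_{ji}$ ($1\le i,j\le k$) has a non-trivial solution $(n_1,\dots,n_k)$, then there exists a connected $S$-regular graph.
   Context: A square matrix is irreducible if its associated directed graph (an arc $i\to j$ iff the $(i,j)$ entry is nonzero) is strongly connected. A simple undirected graph $G=(V,E)$ is $S$-regular if $V$ has a partition into nonempty cells $V_1,\dots,V_k$ such that every vertex $v\in V_i$ has exactly $s_{ij}$ neighbours in $V_j$, for all $i,j$. *)

theory Defs
  imports Complex_Main
begin

text \<open>A k x k matrix is represented as S :: nat => nat => nat, indices in {0..<k}.\<close>

definition mat_digraph :: "nat \<Rightarrow> (nat \<Rightarrow> nat \<Rightarrow> nat) \<Rightarrow> (nat \<times> nat) set" where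
  "mat_digraph k S = {(i, j). i < k \<and> j < k \<and> S i j \<noteq> 0}"

definition irreducible_mat :: "nat \<Rightarrow> (nat \<Rightarrow> nat \<Rightarrow> nat) \<Rightarrow> bool" where
  "irreducible_mat k S \<longleftrightarrow> (\<forall>i<k. \<forall>j<k. (i, j) \<in> (mat_digraph k S)\<^sup>*)"

definition simple_graph :: "'a set \<Rightarrow> ('a \<Rightarrow> 'a \<Rightarrow> bool) \<Rightarrow> bool" where
  "simple_graph V E \<longleftrightarrow> finite V \<and> (\<forall>u v. E u v \<longrightarrow> u \<in> V \<and> v \<in> V)
     \<and> (\<forall>u v. E u v \<longrightarrow> E v u) \<and> (\<forall>v. \<not> E v v)"

definition connected_graph :: "'a set \<Rightarrow> ('a \<Rightarrow> 'a \<Rightarrow> bool) \<Rightarrow> bool" where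
  "connected_graph V E \<longleftrightarrow> V \<noteq> {} \<and>
     (\<forall>u\<in>V. \<forall>w\<in>V. (u, w) \<in> {(x, y). x \<in> V \<and> y \<in> V \<and> E x y}\<^sup>*)"

text \<open>S-regular: a partition of V into nonempty cells V_0..V_(k-1), given by the cell map c
  (v belongs to cell c v), such that each v in cell i has exactly S i j neighbours in cell j.\<close>
definition S_regular :: "nat \<Rightarrow> (nat \<Rightarrow> nat \<Rightarrow> nat) \<Rightarrow> 'a set \<Rightarrow> ('a \<Rightarrow> 'a \<Rightarrow> bool) \<Rightarrow> bool" where
  "S_regular k S V E \<longleftrightarrow> (\<exists>c :: 'a \<Rightarrow> nat.
     (\<forall>v\<in>V. c v < k) \<and> (\<forall>i<k. \<exists>v\<in>V. c v = i) \<and>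
     (\<forall>v\<in>V. \<forall>j<k. card {w \<in> V. E v w \<and> c w = j} = S (c v) j))"

end

theory Submission imports Defs "HOL-Library.Nat_Bijection" begin

lemma count_perm:
  fixes f :: "nat \<Rightarrow> nat"
  assumes "\<forall>z<h. f z < h" "inj_on f {..<h}" "s \<le> h"
  shows "card {z. z < h \<and> f z < s} = s"
proof -
  have img: "f ` {..<h} = {..<h}"
    using endo_inj_surj[of "{..<h}" f] assms by auto
  have "f ` {z. z < h \<and> f z < s} = {..<s}"
  proof
    show "f ` {z. z < h \<and> f z < s} \<subseteq> {..<s}" by auto
    show "{..<s} \<subseteq> f ` {z. z < h \<and> f z < s}"
    proof
      fix u assume "u \<in> {..<s}"
      then have "u \<in> f ` {..<h}" using img assms(3) by auto
      then obtain z where "z < h" "u = f z" by auto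
      then show "u \<in> f ` {z. z < h \<and> f z < s}" using \<open>u \<in> {..<s}\<close> by auto
    qed
  qed
  moreover have "inj_on f {z. z < h \<and> f z < s}"
    using assms(2) by (rule inj_on_subset) auto
  ultimately show ?thesis using card_image by fastforce
qed

definition diag :: "nat \<Rightarrow> nat \<Rightarrow> nat \<Rightarrow> nat \<Rightarrow> bool" where
  "diag h s x y \<longleftrightarrow> (x < h \<and> h \<le> y \<and> y < 2*h \<and> (y - x) mod h < s) \<or>
                    (y < h \<and> h \<le> x \<and> x < 2*h \<and> (x - y) mod h < s)"

lemma inj_a: "x < (h::nat) \<Longrightarrow> inj_on (\<lambda>z. (h + z - x) mod h) {..<h}"
proof (rule inj_onI)
  fix z z' assume "x < h" "z \<in> {..<h}" "z' \<in> {..<h}" "(h + z - x) mod h = (h + z' - x) mod h"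
  then have "int (h + z - x) mod int h = int (h + z' - x) mod int h" by (metis of_nat_mod)
  then have "(int z + (int h - int x)) mod int h = (int z' + (int h - int x)) mod int h"
    using \<open>x < h\<close> by (simp add: of_nat_diff algebra_simps)
  then have "int z mod int h = int z' mod int h" by (simp add: mod_eq_dvd_iff)
  then show "z = z'" using \<open>z \<in> {..<h}\<close> \<open>z' \<in> {..<h}\<close> by simp
qed

lemma inj_b: "z < (h::nat) \<Longrightarrow> inj_on (\<lambda>x. (h + z - x) mod h) {..<h}"
proof (rule inj_onI)
  fix x x' assume "z < h" "x \<in> {..<h}" "x' \<in> {..<h}" "(h + z - x) mod h = (h + z - x') mod h"
  then have "int (h + z - x) mod int h = int (h + z - x') mod int h" by (metis of_nat_mod)
  then have "((int h + int z) - int x) mod int h = ((int h + int z) - int x') mod int h"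
    using \<open>x \<in> {..<h}\<close> \<open>x' \<in> {..<h}\<close> by (simp add: of_nat_diff algebra_simps)
  then have "int x mod int h = int x' mod int h" by (simp add: mod_eq_dvd_iff dvd_diff_commute)
  then show "x = x'" using \<open>x \<in> {..<h}\<close> \<open>x' \<in> {..<h}\<close> by simp
qed

lemma diag_low:
  assumes "x < h" "s \<le> h"
  shows "card {y. y < 2*h \<and> diag h s x y} = s"
proof -
  have "{y. y < 2*h \<and> diag h s x y} = (\<lambda>z. h + z) ` {z. z < h \<and> (h + z - x) mod h < s}"
  proof (rule set_eqI, rule iffI)
    fix y assume "y \<in> {y. y < 2*h \<and> diag h s x y}"
    then have "h \<le> y" "y < 2*h" "(y - x) mod h < s" using assms unfolding diag_def by auto
    then show "y \<in> (\<lambda>z. h + z) ` {z. z < h \<and> (h + z - x) mod h < s}"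
      by (intro image_eqI[of _ _ "y - h"]) auto
  next
    fix y assume "y \<in> (\<lambda>z. h + z) ` {z. z < h \<and> (h + z - x) mod h < s}"
    then show "y \<in> {y. y < 2*h \<and> diag h s x y}" using assms unfolding diag_def by auto
  qed
  moreover have "card {z. z < h \<and> (h + z - x) mod h < s} = s"
    using count_perm[OF _ inj_a[OF assms(1)] assms(2)] assms by auto
  ultimately show ?thesis by (simp add: card_image)
qed

lemma diag_high:
  assumes "h \<le> x" "x < 2*h" "s \<le> h"
  shows "card {y. y < 2*h \<and> diag h s x y} = s"
proof -
  have "{y. y < 2*h \<and> diag h s x y} = {y. y < h \<and> (h + (x - h) - y) mod h < s}"
    using assms unfolding diag_def by auto
  moreover have "card {y. y < h \<and> (h + (x - h) - y) mod h < s} = s"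
    using count_perm[OF _ inj_b[of "x - h" h] assms(3)] assms by auto
  ultimately show ?thesis by simp
qed

lemma diag_sym: "diag h s x y = diag h s y x" unfolding diag_def by auto
lemma diag_irr: "\<not> diag h s x x" unfolding diag_def by auto


definition bip :: "nat \<Rightarrow> nat \<Rightarrow> nat \<Rightarrow> nat \<Rightarrow> nat \<Rightarrow> bool" where
  "bip a b s x y \<longleftrightarrow> (\<exists>t < a * s. x = t div s \<and> y = t mod b)"

lemma bip_left:
  assumes "x < a" "s \<le> b"
  shows "card {y. y < b \<and> bip a b s x y} = s"
proof (cases "s = 0")
  case True then show ?thesis unfolding bip_def by simp
next
  case False
  then have s0: "s > 0" and b0: "b > 0" using assms by auto
  have eq: "{y. y < b \<and> bip a b s x y} = (\<lambda>t. t mod b) ` {x*s..<x*s+s}"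
  proof (rule set_eqI, rule iffI)
    fix y assume "y \<in> {y. y < b \<and> bip a b s x y}"
    then obtain t where "t < a*s" "x = t div s" "y = t mod b" unfolding bip_def by auto
    have "t = x*s + t mod s" using \<open>x = t div s\<close> by simp
    then have mem: "t \<in> {x*s..<x*s+s}" using s0
      by (metis atLeastLessThan_iff le_add1 mod_less_divisor nat_add_left_cancel_less)
    show "y \<in> (\<lambda>t. t mod b) ` {x*s..<x*s+s}" using mem \<open>y = t mod b\<close> by auto
  next
    fix y assume "y \<in> (\<lambda>t. t mod b) ` {x*s..<x*s+s}"
    then obtain t where t: "x*s \<le> t" "t < x*s+s" "y = t mod b" by auto
    have "t div s = x" using t s0
      by (intro div_nat_eqI) (auto simp: algebra_simps)
    have "Suc x * s \<le> a * s" using assms(1) by (intro mult_le_mono1) simp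
    then have "t < a*s" using t by simp
    show "y \<in> {y. y < b \<and> bip a b s x y}" using t b0 \<open>t div s = x\<close> \<open>t < a*s\<close> unfolding bip_def by auto
  qed
  have "inj_on (\<lambda>t. t mod b) {x*s..<x*s+s}"
  proof (rule inj_onI)
    fix t t' assume tt: "t \<in> {x*s..<x*s+s}" "t' \<in> {x*s..<x*s+s}" "t mod b = t' mod b"
    show "t = t'"
    proof (rule ccontr)
      assume "t \<noteq> t'"
      then consider "t < t'" | "t' < t" by linarith
      then show False
      proof cases
        case 1
        then have "b dvd t' - t" using tt(3) by (metis mod_eq_dvd_iff_nat less_imp_le)
        moreover have "t' - t < b" "0 < t' - t" using tt 1 assms by auto
        ultimately show False using nat_dvd_not_less by blast
      next
        case 2
        then have "b dvd t - t'" using tt(3) by (metis mod_eq_dvd_iff_nat less_imp_le)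
        moreover have "t - t' < b" "0 < t - t'" using tt 2 assms by auto
        ultimately show False using nat_dvd_not_less by blast
      qed
    qed
  qed
  then show ?thesis using eq by (simp add: card_image)
qed

lemma bip_right:
  assumes "y < b" "s \<le> b" "a * s = b * s'"
  shows "card {x. x < a \<and> bip a b s x y} = s'"
proof (cases "s = 0")
  case True
  then have "s' = 0" using assms by auto
  then show ?thesis using True unfolding bip_def by simp
next
  case False
  then have s0: "s > 0" and b0: "b > 0" using assms by auto
  have eq: "{x. x < a \<and> bip a b s x y} = (\<lambda>m. (y + m*b) div s) ` {..<s'}"
  proof (rule set_eqI, rule iffI)
    fix x assume "x \<in> {x. x < a \<and> bip a b s x y}"
    then obtain t where t: "t < a*s" "x = t div s" "y = t mod b" unfolding bip_def by auto
    have tt: "t = y + (t div b) * b" using t(3) by simp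
    have "t div b < s'"
    proof -
      have "t < b * s'" using t(1) assms(3) by simp
      then show ?thesis using b0 by (simp add: div_less_iff_less_mult mult.commute)
    qed
    then show "x \<in> (\<lambda>m. (y + m*b) div s) ` {..<s'}" using t tt by (intro image_eqI[of _ _ "t div b"]) auto
  next
    fix x assume "x \<in> (\<lambda>m. (y + m*b) div s) ` {..<s'}"
    then obtain m where m: "m < s'" "x = (y + m*b) div s" by auto
    have "y + m*b < b * s'"
    proof -
      have "y + m*b < b + m*b" using assms(1) by simp
      also have "\<dots> = b * Suc m" by simp
      also have "\<dots> \<le> b * s'" using m(1) by (intro mult_le_mono2) simp
      finally show ?thesis .
    qed
    then have lt: "y + m*b < a * s" using assms(3) by simp
    then have "x < a" using m(2) s0 by (simp add: div_less_iff_less_mult)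
    moreover have "(y + m*b) mod b = y" using assms(1) by simp
    ultimately show "x \<in> {x. x < a \<and> bip a b s x y}" unfolding bip_def using lt m(2)
      by auto
  qed
  have "inj_on (\<lambda>m. (y + m*b) div s) {..<s'}"
  proof -
    have "strict_mono (\<lambda>m. (y + m*b) div s)"
    unfolding strict_mono_Suc_iff
    proof
      fix m
      have "(y + m*b) div s < (y + m*b + s) div s" using s0 by simp
      also have "\<dots> \<le> (y + Suc m * b) div s" using assms(2) by (intro div_le_mono) simp
      finally show "(y + m*b) div s < (y + Suc m * b) div s" .
    qed
    then show ?thesis using strict_mono_imp_inj_on by blast
  qed
  then show ?thesis using eq by (simp add: card_image)
qed


lemma component:
  fixes V :: "'a set"
  assumes sg: "simple_graph V E" and sr: "S_regular k S V E" and irr: "irreducible_mat k S"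
    and v0: "v0 \<in> V"
  shows "\<exists>(V' :: 'a set) E'. simple_graph V' E' \<and> connected_graph V' E' \<and> S_regular k S V' E'"
proof -
  obtain c where c1: "\<forall>v\<in>V. c v < k" and c2: "\<forall>i<k. \<exists>v\<in>V. c v = i"
    and c3: "\<forall>v\<in>V. \<forall>j<k. card {w \<in> V. E v w \<and> c w = j} = S (c v) j"
    using sr unfolding S_regular_def by blast
  have fin: "finite V" and inV: "\<And>u v. E u v \<Longrightarrow> u \<in> V \<and> v \<in> V"
    and symE: "\<And>u v. E u v \<Longrightarrow> E v u" and irrE: "\<And>v. \<not> E v v"
    using sg unfolding simple_graph_def by blast+
  define R where "R = {(x, y). x \<in> V \<and> y \<in> V \<and> E x y}"
  define V' where "V' = {w. (v0, w) \<in> R\<^sup>*}"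
  define E' where "E' = (\<lambda>x y. E x y \<and> x \<in> V' \<and> y \<in> V')"
  define R' where "R' = {(x, y). x \<in> V' \<and> y \<in> V' \<and> E' x y}"
  have v0V': "v0 \<in> V'" unfolding V'_def by simp
  have sub: "V' \<subseteq> V"
  proof
    fix w assume "w \<in> V'"
    then have "(v0, w) \<in> R\<^sup>*" unfolding V'_def by simp
    then show "w \<in> V" using v0 by (induction rule: rtrancl_induct) (auto simp: R_def)
  qed
  have closed: "\<And>x y. x \<in> V' \<Longrightarrow> E x y \<Longrightarrow> y \<in> V'"
  proof -
    fix x y assume "x \<in> V'" "E x y"
    then have "(x, y) \<in> R" using inV unfolding R_def by auto
    then show "y \<in> V'" using \<open>x \<in> V'\<close> unfolding V'_def by auto
  qed
  have nb: "\<And>x j. x \<in> V' \<Longrightarrow> {w \<in> V'. E' x w \<and> c w = j} = {w \<in> V. E x w \<and> c w = j}"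
    using closed sub unfolding E'_def by auto
  have sg': "simple_graph V' E'"
    unfolding simple_graph_def E'_def using fin sub symE irrE finite_subset by blast
  have symR: "sym R" unfolding R_def sym_def using symE by auto
  have key: "\<And>x y. (x, y) \<in> R\<^sup>* \<Longrightarrow> x \<in> V' \<Longrightarrow> (x, y) \<in> R'\<^sup>*"
  proof -
    fix x y assume "(x, y) \<in> R\<^sup>*" "x \<in> V'"
    then show "(x, y) \<in> R'\<^sup>*"
    proof (induction rule: rtrancl_induct)
      case base then show ?case by simp
    next
      case (step y z)
      have "y \<in> V'" using step.hyps(1) \<open>x \<in> V'\<close> unfolding V'_def by auto
      then have "z \<in> V'" using step.hyps(2) closed unfolding R_def by auto
      then have "(y, z) \<in> R'" using \<open>y \<in> V'\<close> step.hyps(2) unfolding R'_def R_def E'_def by auto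
      then show ?case using step.IH step.prems by auto
    qed
  qed
  have conn: "connected_graph V' E'"
    unfolding connected_graph_def
  proof (intro conjI ballI)
    show "V' \<noteq> {}" using v0V' by auto
  next
    fix u w assume "u \<in> V'" "w \<in> V'"
    have "(u, v0) \<in> R\<^sup>*" using \<open>u \<in> V'\<close> sym_rtrancl[OF symR] unfolding V'_def by (auto dest: symD)
    moreover have "(v0, w) \<in> R\<^sup>*" using \<open>w \<in> V'\<close> unfolding V'_def by auto
    ultimately have "(u, w) \<in> R\<^sup>*" by auto
    then have "(u, w) \<in> R'\<^sup>*" using key \<open>u \<in> V'\<close> by auto
    then show "(u, w) \<in> {(x, y). x \<in> V' \<and> y \<in> V' \<and> E' x y}\<^sup>*" unfolding R'_def .
  qed
  have reach: "\<And>a b. (a, b) \<in> (mat_digraph k S)\<^sup>* \<Longrightarrow> (\<exists>v\<in>V'. c v = a) \<Longrightarrow> (\<exists>v\<in>V'. c v = b)"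
  proof -
    fix a b assume "(a, b) \<in> (mat_digraph k S)\<^sup>*" "\<exists>v\<in>V'. c v = a"
    then show "\<exists>v\<in>V'. c v = b"
    proof (induction rule: rtrancl_induct)
      case base then show ?case by simp
    next
      case (step y z)
      then obtain v where v: "v \<in> V'" "c v = y" by auto
      have yz: "y < k" "z < k" "S y z \<noteq> 0" using step.hyps(2) unfolding mat_digraph_def by auto
      have "card {w \<in> V. E v w \<and> c w = z} = S y z" using c3 v sub yz by auto
      then have "{w \<in> V. E v w \<and> c w = z} \<noteq> {}" using yz by (metis card.empty)
      then obtain w where "w \<in> V" "E v w" "c w = z" by auto
      then show ?case using closed v by auto
    qed
  qed
  have sr': "S_regular k S V' E'"
    unfolding S_regular_def
  proof (intro exI[of _ c] conjI ballI allI impI)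
    fix v assume "v \<in> V'" then show "c v < k" using c1 sub by auto
  next
    fix i assume "i < k"
    have "c v0 < k" using c1 v0 by auto
    then have "(c v0, i) \<in> (mat_digraph k S)\<^sup>*" using irr \<open>i < k\<close> unfolding irreducible_mat_def by auto
    then show "\<exists>v\<in>V'. c v = i" using reach v0V' by blast
  next
    fix v j assume "v \<in> V'" "j < k"
    then show "card {w \<in> V'. E' v w \<and> c w = j} = S (c v) j" using nb c3 sub by auto
  qed
  show ?thesis using sg' conn sr' by blast
qed

lemma transfer:
  fixes V :: "'a set" and f :: "'a \<Rightarrow> nat"
  assumes sg: "simple_graph V E" and cg: "connected_graph V E" and sr: "S_regular k S V E"
    and inj: "inj_on f V"
  shows "\<exists>(V' :: nat set) E'. simple_graph V' E' \<and> connected_graph V' E' \<and> S_regular k S V' E'"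
proof -
  obtain c where c1: "\<forall>v\<in>V. c v < k" and c2: "\<forall>i<k. \<exists>v\<in>V. c v = i"
    and c3: "\<forall>v\<in>V. \<forall>j<k. card {w \<in> V. E v w \<and> c w = j} = S (c v) j"
    using sr unfolding S_regular_def by blast
  have fin: "finite V" and inV: "\<And>u v. E u v \<Longrightarrow> u \<in> V \<and> v \<in> V"
    and symE: "\<And>u v. E u v \<Longrightarrow> E v u" and irrE: "\<And>v. \<not> E v v"
    using sg unfolding simple_graph_def by blast+
  define g where "g = inv_into V f"
  have gf: "\<And>v. v \<in> V \<Longrightarrow> g (f v) = v" unfolding g_def using inj by simp
  define V' where "V' = f ` V"
  define E' where "E' = (\<lambda>x y. x \<in> V' \<and> y \<in> V' \<and> E (g x) (g y))"
  have sg': "simple_graph V' E'"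
    unfolding simple_graph_def E'_def V'_def using fin symE irrE by auto
  have nb: "\<And>v j. v \<in> V \<Longrightarrow> {w \<in> V'. E' (f v) w \<and> c (g w) = j} = f ` {w \<in> V. E v w \<and> c w = j}"
    unfolding V'_def E'_def using gf by auto
  have sr': "S_regular k S V' E'"
    unfolding S_regular_def
  proof (intro exI[of _ "c \<circ> g"] conjI ballI allI impI)
    fix v assume "v \<in> V'" then show "(c \<circ> g) v < k" using c1 gf unfolding V'_def by auto
  next
    fix i assume "i < k"
    then obtain v where "v \<in> V" "c v = i" using c2 by auto
    then show "\<exists>v\<in>V'. (c \<circ> g) v = i" using gf unfolding V'_def by force
  next
    fix v j assume "v \<in> V'" "j < k"
    then obtain u where u: "u \<in> V" "v = f u" unfolding V'_def by auto
    have "card {w \<in> V'. E' v w \<and> (c \<circ> g) w = j} = card (f ` {w \<in> V. E u w \<and> c w = j})"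
      using nb[OF u(1)] u by simp
    also have "\<dots> = card {w \<in> V. E u w \<and> c w = j}"
      by (rule card_image) (rule inj_on_subset[OF inj], auto)
    also have "\<dots> = S (c u) j" using c3 u \<open>j < k\<close> by auto
    finally show "card {w \<in> V'. E' v w \<and> (c \<circ> g) w = j} = S ((c \<circ> g) v) j" using u gf by simp
  qed
  define R where "R = {(x, y). x \<in> V \<and> y \<in> V \<and> E x y}"
  define R' where "R' = {(x, y). x \<in> V' \<and> y \<in> V' \<and> E' x y}"
  have lift: "\<And>x y. (x, y) \<in> R\<^sup>* \<Longrightarrow> (f x, f y) \<in> R'\<^sup>*"
  proof -
    fix x y assume "(x, y) \<in> R\<^sup>*"
    then show "(f x, f y) \<in> R'\<^sup>*"
    proof (induction rule: rtrancl_induct)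
      case base then show ?case by simp
    next
      case (step y z)
      then have "(f y, f z) \<in> R'" unfolding R_def R'_def E'_def V'_def using gf by auto
      then show ?case using step.IH by auto
    qed
  qed
  have cg': "connected_graph V' E'"
    unfolding connected_graph_def
  proof (intro conjI ballI)
    show "V' \<noteq> {}" using cg unfolding connected_graph_def V'_def by auto
  next
    fix u w assume "u \<in> V'" "w \<in> V'"
    then obtain x y where "x \<in> V" "y \<in> V" "u = f x" "w = f y" unfolding V'_def by auto
    then have "(x, y) \<in> R\<^sup>*" using cg unfolding connected_graph_def R_def by auto
    then show "(u, w) \<in> {(x, y). x \<in> V' \<and> y \<in> V' \<and> E' x y}\<^sup>*"
      using lift \<open>u = f x\<close> \<open>w = f y\<close> unfolding R'_def by auto
  qed
  show ?thesis using sg' cg' sr' by blast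
qed


lemma construct:
  fixes m :: "nat \<Rightarrow> nat"
  assumes pos: "\<forall>i<k. 0 < m i" and eq: "\<forall>i<k. \<forall>j<k. m i * S i j = m j * S j i"
  shows "\<exists>(V :: (nat \<times> nat) set) E. simple_graph V E \<and> S_regular k S V E"
proof -
  define M where "M = (\<Sum>i<k. \<Sum>j<k. S i j)"
  have Sle: "\<And>i j. i < k \<Longrightarrow> j < k \<Longrightarrow> S i j \<le> M"
  proof -
    fix i j assume "i < k" "j < k"
    have "S i j \<le> (\<Sum>j<k. S i j)" using \<open>j < k\<close> by (intro member_le_sum) auto
    also have "\<dots> \<le> M" unfolding M_def using \<open>i < k\<close>
      by (intro member_le_sum[of i "{..<k}" "\<lambda>i. \<Sum>j<k. S i j"]) auto
    finally show "S i j \<le> M" .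
  qed
  define h where "h i = m i * (M + 1)" for i
  define a where "a i = 2 * h i" for i
  have hge: "\<And>i. i < k \<Longrightarrow> M + 1 \<le> h i"
  proof -
    fix i assume "i < k"
    then have "1 \<le> m i" using pos by (simp add: Suc_le_eq)
    then have "1 * (M + 1) \<le> m i * (M + 1)" by (rule mult_le_mono1)
    then show "M + 1 \<le> h i" unfolding h_def by simp
  qed
  have Sh: "\<And>i j. i < k \<Longrightarrow> j < k \<Longrightarrow> S j i \<le> h i" using Sle hge by (meson le_trans le_add1)
  have Sa: "\<And>i j. i < k \<Longrightarrow> j < k \<Longrightarrow> S j i \<le> a i" using Sh unfolding a_def by fastforce
  have apos: "\<And>i. i < k \<Longrightarrow> 0 < a i" using hge unfolding a_def by fastforce
  have aeq: "\<And>i j. i < k \<Longrightarrow> j < k \<Longrightarrow> a i * S i j = a j * S j i"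
    unfolding a_def h_def using eq by (metis mult.assoc mult.left_commute)
  define adj where "adj i x j y = (if i = j then diag (h i) (S i i) x y
      else if i < j then bip (a i) (a j) (S i j) x y else bip (a j) (a i) (S j i) y x)" for i x j y
  define V where "V = Sigma {..<k} (\<lambda>i. {..<a i})"
  define E where "E p q = (p \<in> V \<and> q \<in> V \<and> adj (fst p) (snd p) (fst q) (snd q))" for p q
  have sg: "simple_graph V E"
    unfolding simple_graph_def
  proof (intro conjI allI impI)
    show "finite V" unfolding V_def by auto
  next
    fix u v assume "E u v" then show "u \<in> V" "v \<in> V" unfolding E_def by auto
  next
    fix u v assume "E u v" then show "E v u" unfolding E_def adj_def using diag_sym by auto
  next
    fix v show "\<not> E v v" unfolding E_def adj_def using diag_irr by auto
  qed
  have sr: "S_regular k S V E"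
    unfolding S_regular_def
  proof (intro exI[of _ fst] conjI ballI allI impI)
    fix v assume "v \<in> V" then show "fst v < k" unfolding V_def by auto
  next
    fix i assume "i < k" then show "\<exists>v\<in>V. fst v = i" using apos unfolding V_def by force
  next
    fix v j assume "v \<in> V" "j < k"
    then obtain i x where v: "v = (i, x)" "i < k" "x < a i" unfolding V_def by auto
    have "{w \<in> V. E v w \<and> fst w = j} = Pair j ` {y. y < a j \<and> adj i x j y}"
      using \<open>v \<in> V\<close> \<open>j < k\<close> v unfolding E_def V_def by auto
    then have "card {w \<in> V. E v w \<and> fst w = j} = card {y. y < a j \<and> adj i x j y}"
      by (simp add: card_image inj_on_def)
    also have "\<dots> = S i j"
    proof -
      consider "i = j" | "i < j" | "j < i" by linarith
      then show ?thesis
      proof cases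
        case 1
        then have e: "{y. y < a j \<and> adj i x j y} = {y. y < 2 * h i \<and> diag (h i) (S i i) x y}"
          unfolding adj_def a_def by auto
        have "S i i \<le> h i" using Sh v by auto
        then show ?thesis using e 1 diag_low diag_high v(3) unfolding a_def
          by (cases "x < h i") auto
      next
        case 2
        then have e: "{y. y < a j \<and> adj i x j y} = {y. y < a j \<and> bip (a i) (a j) (S i j) x y}"
          unfolding adj_def by auto
        show ?thesis unfolding e using bip_left[OF v(3) Sa[OF \<open>j < k\<close> v(2)]] .
      next
        case 3
        then have e: "{y. y < a j \<and> adj i x j y} = {y. y < a j \<and> bip (a j) (a i) (S j i) y x}"
          unfolding adj_def by auto
        show ?thesis unfolding e
          using bip_right[OF v(3) Sa[OF v(2) \<open>j < k\<close>] aeq[OF \<open>j < k\<close> v(2)]] .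
      qed
    qed
    finally show "card {w \<in> V. E v w \<and> fst w = j} = S (fst v) j" using v by simp
  qed
  show ?thesis using sg sr by blast
qed


lemma common_denom:
  fixes q :: "nat \<Rightarrow> real"
  shows "(\<forall>j<k. q j \<in> \<rat> \<and> q j > 0) \<Longrightarrow> \<exists>D::nat. D > 0 \<and> (\<forall>j<k. \<exists>m::nat. m > 0 \<and> real m = q j * real D)"
proof (induction k)
  case 0 then show ?case by (intro exI[of _ 1]) auto
next
  case (Suc k)
  then obtain D :: nat where D: "D > 0" "\<forall>j<k. \<exists>m::nat. m > 0 \<and> real m = q j * real D" by auto
  have "q k \<in> \<rat>" "q k > 0" using Suc.prems by auto
  then obtain p d :: nat where pd: "d \<noteq> 0" "\<bar>q k\<bar> = real p / real d"
    by (elim Rats_abs_nat_div_natE)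
  then have qk: "q k = real p / real d" using \<open>q k > 0\<close> by simp
  then have "p > 0" using \<open>q k > 0\<close> by (cases "p = 0") auto
  show ?case
  proof (rule exI[of _ "D * d"], intro conjI allI impI)
    show "D * d > 0" using D pd by auto
  next
    fix j assume "j < Suc k"
    show "\<exists>m::nat. m > 0 \<and> real m = q j * real (D * d)"
    proof (cases "j = k")
      case True
      then show ?thesis using qk pd \<open>p > 0\<close> D
        by (intro exI[of _ "p * D"]) auto
    next
      case False
      then have "j < k" using \<open>j < Suc k\<close> by simp
      then obtain m :: nat where "m > 0" "real m = q j * real D" using D by auto
      then show ?thesis using pd by (intro exI[of _ "m * d"]) auto
    qed
  qed
qed

lemma int_solution:
  fixes k :: nat and S :: "nat \<Rightarrow> nat \<Rightarrow> nat"
  assumes irr: "irreducible_mat k S"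
    and sol: "\<exists>n :: nat \<Rightarrow> real. (\<exists>i<k. n i \<noteq> 0) \<and>
                 (\<forall>i<k. \<forall>j<k. n i * real (S i j) = n j * real (S j i))"
  shows "\<exists>m :: nat \<Rightarrow> nat. (\<forall>i<k. 0 < m i) \<and> (\<forall>i<k. \<forall>j<k. m i * S i j = m j * S j i)"
proof -
  obtain n :: "nat \<Rightarrow> real" and r where r: "r < k" "n r \<noteq> 0"
    and neq: "\<forall>i<k. \<forall>j<k. n i * real (S i j) = n j * real (S j i)" using sol by blast
  define q where "q j = n j / n r" for j
  have qeq: "\<And>i j. i < k \<Longrightarrow> j < k \<Longrightarrow> q i * real (S i j) = q j * real (S j i)"
    unfolding q_def using neq r(2) by (metis times_divide_eq_left)
  have qr: "\<forall>j<k. q j \<in> \<rat> \<and> q j > 0"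
  proof (intro allI impI)
    fix j assume "j < k"
    then have "(r, j) \<in> (mat_digraph k S)\<^sup>*" using irr r unfolding irreducible_mat_def by auto
    then show "q j \<in> \<rat> \<and> q j > 0"
    proof (induction rule: rtrancl_induct)
      case base then show ?case using r unfolding q_def by simp
    next
      case (step b c)
      have bc: "b < k" "c < k" "S b c \<noteq> 0" using step.hyps(2) unfolding mat_digraph_def by auto
      have e: "q c * real (S c b) = q b * real (S b c)" using qeq[OF bc(1,2)] by simp
      have "q b * real (S b c) > 0" using step.IH bc by simp
      then have "S c b \<noteq> 0" using e by (cases "S c b = 0") auto
      then have qc: "q c = q b * real (S b c) / real (S c b)" using e by (simp add: field_simps)
      have "q c \<in> \<rat>" unfolding qc using step.IH by simp
      moreover have "q c > 0" unfolding qc using step.IH bc \<open>S c b \<noteq> 0\<close> by simp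
      ultimately show ?case by simp
    qed
  qed
  obtain D :: nat where D: "D > 0" "\<forall>j<k. \<exists>m::nat. m > 0 \<and> real m = q j * real D"
    using common_denom[OF qr] by blast
  then obtain m :: "nat \<Rightarrow> nat" where m: "\<forall>j<k. m j > 0 \<and> real (m j) = q j * real D"
    by metis
  show ?thesis
  proof (intro exI[of _ m] conjI allI impI)
    fix i assume "i < k" then show "0 < m i" using m by auto
  next
    fix i j assume "i < k" "j < k"
    have "real (m i * S i j) = q i * real (S i j) * real D" using m \<open>i < k\<close> by simp
    also have "\<dots> = q j * real (S j i) * real D" using qeq[OF \<open>i < k\<close> \<open>j < k\<close>] by simp
    also have "\<dots> = real (m j * S j i)" using m \<open>j < k\<close> by simp
    finally show "m i * S i j = m j * S j i" by (simp only: of_nat_eq_iff)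
  qed
qed

theorem mainTheorem2:
  fixes k :: nat and S :: "nat \<Rightarrow> nat \<Rightarrow> nat"
  assumes irr: "irreducible_mat k S"
    and sol: "\<exists>n :: nat \<Rightarrow> real. (\<exists>i<k. n i \<noteq> 0) \<and>
                 (\<forall>i<k. \<forall>j<k. n i * real (S i j) = n j * real (S j i))"
  shows "\<exists>(V :: nat set) E. simple_graph V E \<and> connected_graph V E \<and> S_regular k S V E"
proof -
  have "k > 0" using sol by auto
  obtain m :: "nat \<Rightarrow> nat" where m: "\<forall>i<k. 0 < m i" "\<forall>i<k. \<forall>j<k. m i * S i j = m j * S j i"
    using int_solution[OF irr sol] by blast
  obtain V :: "(nat \<times> nat) set" and E where sg: "simple_graph V E" and sr: "S_regular k S V E"
    using construct[OF m] by blast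
  obtain v0 where "v0 \<in> V" using sr \<open>k > 0\<close> unfolding S_regular_def by blast
  obtain V' :: "(nat \<times> nat) set" and E' where
    h: "simple_graph V' E'" "connected_graph V' E'" "S_regular k S V' E'"
    using component[OF sg sr irr \<open>v0 \<in> V\<close>] by blast
  show ?thesis
    by (rule transfer[OF h, of prod_encode]) (simp add: inj_prod_encode)
qed

end
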